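(* Assume $f(x,y)=h(x)g(y)$ where $g:\mathbb{R}^m\to\mathbb{R}$ is bounded and Lipschitz and $h:\mathbb{R}^n\to\mathbb{R}$ is Lipschitz with $\|h\|_\infty\le C_1$. Let $w_*\in C^2(\mathbb{R}^m)$ be the solution of $\mathcal{L}(y,D_yw_*,D^2_{yy}w_* )+g(y)=\lambda_1$ in $\mathbb{R}^m$, $w_*(0)=0$ (with $\lambda_1$ the associated ergodic constant), and let $\chi(y)=|y|^2$. Then: (i) there exists $C_5>0$ such that $|w_*(y)|\le C_5\big(1+\log(1+|y|^2)\big)$ for all $y\in\mathbb{R}^m$; (ii) for every $\eta>0$, $|h(x)w_*(y)|-\eta\chi(y)\le C_1C_5\log(C_1C_5)-C_1C_5\log\eta+\eta$ for all $(x,y)\in\mathbb{R}^n\times\mathbb{R}^m$.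
   Context: Let $n,m\ge1$. $\mathcal{L}(y,q,Y):=-\mathrm{tr}\big(\tau(y)\tau(y)^TY\big)+\alpha\, y\cdot q+b(y)\cdot q$, where $\alpha>0$; $\tau$ is matrix-valued on $\mathbb{R}^m$ with bounded Lipschitz coefficients; $b:\mathbb{R}^m\to\mathbb{R}^m$ is bounded and Lipschitz; there is $\theta>0$ with $\xi\tau(y)\tau(y)^T\xi^T\ge\theta|\xi|^2$ for all $y,\xi$. The pair $(w_*,\lambda_1)$ with $w_*(0)=0$ is the unique solution of the cell problem for $g$. *)

theory Defs
  imports "HOL-Analysis.Analysis"
begin

definition Lop :: "(real^'m \<Rightarrow> real^'d^'m) \<Rightarrow> real \<Rightarrow> (real^'m \<Rightarrow> real^'m)
                   \<Rightarrow> real^'m \<Rightarrow> real^'m \<Rightarrow> real^'m^'m \<Rightarrow> real" where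
  "Lop tau alpha b y q Y = - trace (tau y ** transpose (tau y) ** Y) + alpha * (y \<bullet> q) + b y \<bullet> q"

end

theory Submission
  imports Defs "HOL-Analysis.Analysis"
begin

lemma second_deriv_max:
  fixes f f' :: "real \<Rightarrow> real"
  assumes d1: "\<And>t. (f has_real_derivative f' t) (at t)"
    and d2: "(f' has_real_derivative s) (at 0)"
    and mx: "\<And>t. f t \<le> f 0"
  shows "s \<le> 0"
proof (rule ccontr)
  assume "\<not> s \<le> 0" hence sp: "s > 0" by simp
  have f0: "f' 0 = 0"
    using DERIV_local_max[OF d1[of 0], of 1] mx by auto
  obtain d where dp: "d > 0" and dd: "\<And>h. h > 0 \<Longrightarrow> h < d \<Longrightarrow> f' 0 < f' (0 + h)"
    using DERIV_pos_inc_right[OF d2 sp] by blast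
  have "\<exists>z. 0 < z \<and> z < d/2 \<and> f (d/2) - f 0 = (d/2 - 0) * f' z"
    by (rule MVT2) (use dp d1 in auto)
  then obtain z where z: "0 < z" "z < d/2" "f (d/2) - f 0 = (d/2) * f' z" by auto
  have "f' z > 0" using dd[of z] z dp f0 by auto
  hence "f (d/2) - f 0 > 0" using z(3) dp by (metis half_gt_zero mult_pos_pos)
  thus False using mx[of "d/2"] by simp
qed

lemma trace_col:
  fixes T :: "real^'d^'m" and A :: "real^'m^'m"
  shows "trace (T ** transpose T ** A) = (\<Sum>k\<in>UNIV. (\<chi> i. T$i$k) \<bullet> (A *v (\<chi> i. T$i$k)))"
proof -
  have "trace (T ** transpose T ** A) = (\<Sum>i\<in>UNIV. \<Sum>a\<in>UNIV. \<Sum>k\<in>UNIV. T$i$k * T$a$k * A$a$i)"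
    unfolding trace_def matrix_matrix_mult_def transpose_def
    by (simp add: sum_distrib_left sum_distrib_right)
  also have "\<dots> = (\<Sum>i\<in>UNIV. \<Sum>k\<in>UNIV. \<Sum>a\<in>UNIV. T$i$k * T$a$k * A$a$i)"
    by (rule sum.cong[OF refl], rule sum.swap)
  also have "\<dots> = (\<Sum>k\<in>UNIV. \<Sum>i\<in>UNIV. \<Sum>a\<in>UNIV. T$i$k * T$a$k * A$a$i)"
    by (rule sum.swap)
  also have "\<dots> = (\<Sum>k\<in>UNIV. \<Sum>a\<in>UNIV. \<Sum>i\<in>UNIV. T$i$k * T$a$k * A$a$i)"
    by (rule sum.cong[OF refl], rule sum.swap)
  also have "\<dots> = (\<Sum>k\<in>UNIV. (\<chi> i. T$i$k) \<bullet> (A *v (\<chi> i. T$i$k)))"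
    unfolding matrix_vector_mult_def inner_vec_def
    by (simp add: sum_distrib_left sum_distrib_right algebra_simps)
  finally show ?thesis .
qed

lemma w_line:
  fixes w :: "real^'m \<Rightarrow> real" and Dw :: "real^'m \<Rightarrow> real^'m"
  assumes "\<And>y. (w has_derivative (\<lambda>v. Dw y \<bullet> v)) (at y)"
  shows "((\<lambda>t. w (y0 + t *\<^sub>R c)) has_real_derivative (Dw (y0 + t *\<^sub>R c) \<bullet> c)) (at t)"
proof -
  have l: "((\<lambda>t. y0 + t *\<^sub>R c) has_derivative (\<lambda>s. s *\<^sub>R c)) (at t)"
    by (auto intro!: derivative_eq_intros)
  have "((\<lambda>t. w (y0 + t *\<^sub>R c)) has_derivative (\<lambda>s. Dw (y0 + t *\<^sub>R c) \<bullet> (s *\<^sub>R c))) (at t)"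
    by (rule has_derivative_compose[OF l assms])
  thus ?thesis unfolding has_field_derivative_def
    by (rule has_derivative_eq_rhs) (auto simp: fun_eq_iff)
qed

lemma Dw_line:
  fixes Dw :: "real^'m \<Rightarrow> real^'m" and D2w :: "real^'m \<Rightarrow> real^'m^'m"
  assumes "\<And>y. (Dw has_derivative (\<lambda>v. D2w y *v v)) (at y)"
  shows "((\<lambda>t. Dw (y0 + t *\<^sub>R c) \<bullet> c) has_real_derivative ((D2w y0 *v c) \<bullet> c)) (at 0)"
proof -
  have l: "((\<lambda>t. y0 + t *\<^sub>R c) has_derivative (\<lambda>s. s *\<^sub>R c)) (at 0)"
    by (auto intro!: derivative_eq_intros)
  have "((\<lambda>t. Dw (y0 + t *\<^sub>R c)) has_derivative (\<lambda>s. D2w (y0 + 0 *\<^sub>R c) *v (s *\<^sub>R c))) (at 0)"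
    by (rule has_derivative_compose[OF l assms])
  hence "((\<lambda>t. Dw (y0 + t *\<^sub>R c) \<bullet> c) has_derivative (\<lambda>s. (D2w y0 *v (s *\<^sub>R c)) \<bullet> c)) (at 0)"
    using has_derivative_inner_left by fastforce
  thus ?thesis unfolding has_field_derivative_def
    by (rule has_derivative_eq_rhs) (auto simp: fun_eq_iff matrix_vector_mult_scaleR)
qed

lemma inner_line:
  fixes y0 c :: "'a::real_inner"
  shows "(y0 + t *\<^sub>R c) \<bullet> (y0 + t *\<^sub>R c) = y0 \<bullet> y0 + 2 * t * (y0 \<bullet> c) + t\<^sup>2 * (c \<bullet> c)"
    and "(y0 + t *\<^sub>R c) \<bullet> c = y0 \<bullet> c + t * (c \<bullet> c)"
  by (simp_all add: inner_add_left inner_add_right inner_commute power2_eq_square algebra_simps)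

lemma Q_deriv: "((\<lambda>t::real. 1 + (a + 2*t*bb + t\<^sup>2*cc)) has_real_derivative (2*bb + 2*t*cc)) (at t)"
  by (auto intro!: derivative_eq_intros simp: algebra_simps)

lemma G1_deriv:
  assumes "r > 0"
  shows "((\<lambda>r::real. K * ln r + e * r ^ Suc k) has_real_derivative (K / r + e * real (Suc k) * r ^ k)) (at r)"
  using assms by (auto intro!: derivative_eq_intros simp: field_simps) (cases k, auto)

lemma G2_deriv:
  assumes "r > 0"
  shows "((\<lambda>r::real. K / r + e * real (Suc k) * r ^ k) has_real_derivative (- K / r\<^sup>2 + e * real (Suc k) * real k * r ^ (k - 1))) (at r)"
  using assms by (auto intro!: derivative_eq_intros simp: field_simps power2_eq_square)

lemma phi_d1:
  fixes K e a bb cc t :: real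
  assumes pos: "1 + (a + 2*t*bb + t\<^sup>2*cc) > 0"
  shows "((\<lambda>t. K * ln (1 + (a + 2*t*bb + t\<^sup>2*cc)) + e * (1 + (a + 2*t*bb + t\<^sup>2*cc)) ^ Suc k)
     has_real_derivative
     ((K / (1 + (a + 2*t*bb + t\<^sup>2*cc)) + e * real (Suc k) * (1 + (a + 2*t*bb + t\<^sup>2*cc)) ^ k) * (2*bb + 2*t*cc))) (at t)"
  using DERIV_chain2[OF G1_deriv[OF pos] Q_deriv] .

lemma phi_d2:
  fixes K e a bb cc :: real
  assumes pos: "1 + a > 0"
  shows "((\<lambda>t. (K / (1 + (a + 2*t*bb + t\<^sup>2*cc)) + e * real (Suc k) * (1 + (a + 2*t*bb + t\<^sup>2*cc)) ^ k) * (2*bb + 2*t*cc))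
     has_real_derivative
     ((- K / (1 + a)\<^sup>2 + e * real (Suc k) * real k * (1 + a) ^ (k - 1)) * (2*bb) * (2*bb)
      + (K / (1 + a) + e * real (Suc k) * (1 + a) ^ k) * (2*cc))) (at 0)"
proof -
  have p0: "1 + (a + 2*0*bb + 0\<^sup>2*cc) > 0" using pos by simp
  have A: "((\<lambda>t. (K / (1 + (a + 2*t*bb + t\<^sup>2*cc)) + e * real (Suc k) * (1 + (a + 2*t*bb + t\<^sup>2*cc)) ^ k))
     has_real_derivative (- K / (1 + (a + 2*0*bb + 0\<^sup>2*cc))\<^sup>2 + e * real (Suc k) * real k * (1 + (a + 2*0*bb + 0\<^sup>2*cc)) ^ (k - 1)) * (2*bb + 2*0*cc)) (at 0)"
    using DERIV_chain2[OF G2_deriv[OF p0] Q_deriv] .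
  have B: "((\<lambda>t::real. 2*bb + 2*t*cc) has_real_derivative 2*cc) (at 0)"
    by (auto intro!: derivative_eq_intros)
  show ?thesis using DERIV_mult[OF A B] by (simp add: algebra_simps)
qed

lemma line_facts:
  fixes w :: "real^'m \<Rightarrow> real" and Dw :: "real^'m \<Rightarrow> real^'m" and D2w :: "real^'m \<Rightarrow> real^'m^'m"
  assumes D1: "\<And>y. (w has_derivative (\<lambda>v. Dw y \<bullet> v)) (at y)"
    and D2: "\<And>y. (Dw has_derivative (\<lambda>v. D2w y *v v)) (at y)"
    and mx: "\<And>y. w y - (K * ln (1 + y \<bullet> y) + e * (1 + y \<bullet> y) ^ Suc k)
               \<le> w y0 - (K * ln (1 + y0 \<bullet> y0) + e * (1 + y0 \<bullet> y0) ^ Suc k)"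
  shows "Dw y0 \<bullet> c = (K / (1 + y0 \<bullet> y0) + e * real (Suc k) * (1 + y0 \<bullet> y0) ^ k) * (2 * (y0 \<bullet> c))"
    and "(D2w y0 *v c) \<bullet> c \<le> (- K / (1 + y0 \<bullet> y0)\<^sup>2 + e * real (Suc k) * real k * (1 + y0 \<bullet> y0) ^ (k - 1)) * (2 * (y0 \<bullet> c)) * (2 * (y0 \<bullet> c))
      + (K / (1 + y0 \<bullet> y0) + e * real (Suc k) * (1 + y0 \<bullet> y0) ^ k) * (2 * (c \<bullet> c))"
proof -
  define a where "a = y0 \<bullet> y0"
  define bb where "bb = y0 \<bullet> c"
  define cc where "cc = c \<bullet> c"
  define q where "q t = a + 2*t*bb + t\<^sup>2*cc" for t :: real
  define G where "G r = K / (1 + r) + e * real (Suc k) * (1 + r) ^ k" for r :: real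
  define f where "f t = w (y0 + t *\<^sub>R c) - (K * ln (1 + q t) + e * (1 + q t) ^ Suc k)" for t
  define f' where "f' t = Dw (y0 + t *\<^sub>R c) \<bullet> c - G (q t) * (2*bb + 2*t*cc)" for t
  have qe: "q t = (y0 + t *\<^sub>R c) \<bullet> (y0 + t *\<^sub>R c)" for t
    unfolding q_def a_def bb_def cc_def by (simp add: inner_line)
  have qpos: "1 + q t > 0" for t
    unfolding qe by (smt (verit) inner_ge_zero)
  have fd: "(f has_real_derivative f' t) (at t)" for t
  proof -
    have "((\<lambda>t. K * ln (1 + q t) + e * (1 + q t) ^ Suc k) has_real_derivative G (q t) * (2*bb + 2*t*cc)) (at t)"
      unfolding q_def G_def using phi_d1[OF qpos[unfolded q_def]] .
    from DERIV_diff[OF w_line[OF D1] this] show ?thesis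
      unfolding f_def f'_def by simp
  qed
  have a0: "1 + a > 0" unfolding a_def by (smt (verit) inner_ge_zero)
  have f'd: "(f' has_real_derivative ((D2w y0 *v c) \<bullet> c - ((- K / (1 + a)\<^sup>2 + e * real (Suc k) * real k * (1 + a) ^ (k - 1)) * (2*bb) * (2*bb)
      + G a * (2*cc)))) (at 0)"
  proof -
    have "((\<lambda>t. G (q t) * (2*bb + 2*t*cc)) has_real_derivative ((- K / (1 + a)\<^sup>2 + e * real (Suc k) * real k * (1 + a) ^ (k - 1)) * (2*bb) * (2*bb)
      + G a * (2*cc))) (at 0)"
      unfolding q_def G_def using phi_d2[OF a0] .
    from DERIV_diff[OF Dw_line[OF D2] this] show ?thesis
      unfolding f'_def by simp
  qed
  have fmx: "f t \<le> f 0" for t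
    using mx[of "y0 + t *\<^sub>R c"] unfolding f_def qe by simp
  have "f' 0 = 0"
    using DERIV_local_max[OF fd[of 0], of 1] fmx by auto
  thus "Dw y0 \<bullet> c = (K / (1 + y0 \<bullet> y0) + e * real (Suc k) * (1 + y0 \<bullet> y0) ^ k) * (2 * (y0 \<bullet> c))"
    unfolding f'_def G_def q_def a_def bb_def by simp
  have "(D2w y0 *v c) \<bullet> c - ((- K / (1 + a)\<^sup>2 + e * real (Suc k) * real k * (1 + a) ^ (k - 1)) * (2*bb) * (2*bb)
      + G a * (2*cc)) \<le> 0"
    by (rule second_deriv_max[OF fd f'd fmx])
  thus "(D2w y0 *v c) \<bullet> c \<le> (- K / (1 + y0 \<bullet> y0)\<^sup>2 + e * real (Suc k) * real k * (1 + y0 \<bullet> y0) ^ (k - 1)) * (2 * (y0 \<bullet> c)) * (2 * (y0 \<bullet> c))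
      + (K / (1 + y0 \<bullet> y0) + e * real (Suc k) * (1 + y0 \<bullet> y0) ^ k) * (2 * (c \<bullet> c))"
    unfolding G_def a_def bb_def cc_def by simp
qed

lemma exists_max:
  fixes u :: "'a::euclidean_space \<Rightarrow> real"
  assumes cu: "continuous_on UNIV u"
    and far: "\<exists>\<rho>. \<forall>y. norm y > \<rho> \<longrightarrow> u y < u 0"
  shows "\<exists>y0. \<forall>y. u y \<le> u y0"
proof -
  obtain \<rho> where r: "\<And>y. norm y > \<rho> \<Longrightarrow> u y < u 0" using far by blast
  define S where "S = {y. u 0 \<le> u y}"
  have "S \<subseteq> cball 0 \<rho>" unfolding S_def using r by (force simp: not_less)
  hence bS: "bounded S" using bounded_cball bounded_subset by blast
  have cS: "closed S" unfolding S_def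
    by (rule closed_Collect_le[OF continuous_on_const cu])
  have "compact S" using bS cS by (simp add: compact_eq_bounded_closed)
  moreover have "S \<noteq> {}" unfolding S_def by auto
  ultimately obtain y0 where y0: "y0 \<in> S" "\<And>y. y \<in> S \<Longrightarrow> u y \<le> u y0"
    using continuous_attains_sup[of S u] continuous_on_subset[OF cu] by blast
  have "u y \<le> u y0" for y
  proof (cases "y \<in> S")
    case True thus ?thesis using y0 by blast
  next
    case False thus ?thesis using y0(1) unfolding S_def by auto
  qed
  thus ?thesis by blast
qed

lemma pow_km1: "real k * (1 + r) ^ (k - 1) * r \<le> real k * (1 + r) ^ k" if "r \<ge> (0::real)"
proof (cases k)
  case 0 thus ?thesis by simp
next
  case (Suc j)
  have "(1 + r) ^ j * r \<le> (1 + r) ^ j * (1 + r)" using that by (intro mult_left_mono) auto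
  thus ?thesis using Suc by (simp add: mult.assoc mult.commute mult_left_mono)
qed

lemma final_real:
  fixes K E T Bb alpha r0 rho X :: real
  assumes "K \<ge> 0" "E \<ge> 0" "T \<ge> 0" "alpha > 0" "r0 \<ge> 0"
    and cond: "alpha * r0 \<ge> 2 * Bb * rho + 2 * T * (2 * real k + 1) + alpha"
    and X: "X \<ge> alpha * r0 - Bb * rho" "Bb * rho \<ge> 0"
  shows "2 * (K / (1 + r0) + E) * X - (4 * E * real k + 2 * (K / (1 + r0) + E)) * T \<ge> K * alpha"
proof -
  have tk: "T * real k \<ge> 0" using assms by simp
  have e1: "2*T*(2*real k+1) = 4*(T*real k) + 2*T" "alpha*(1+r0) = alpha + alpha*r0"
    "2 * real k * T = 2 * (T * real k)" "2 * Bb * rho = 2 * (Bb * rho)"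
    by (simp_all add: algebra_simps)
  have h1: "X - T \<ge> alpha * (1 + r0) / 2" using cond X assms tk e1 by linarith
  have h2: "X - T - 2 * real k * T \<ge> 0" using cond X assms tk e1 by linarith
  have "2 * (K / (1 + r0)) * (X - T) \<ge> 2 * (K / (1 + r0)) * (alpha * (1 + r0) / 2)"
    using h1 assms by (intro mult_left_mono) auto
  also have "2 * (K / (1 + r0)) * (alpha * (1 + r0) / 2) = K * alpha" using assms by (simp add: field_simps)
  finally have A: "2 * (K / (1 + r0)) * (X - T) \<ge> K * alpha" .
  have B: "2 * E * (X - T - 2 * real k * T) \<ge> 0" using h2 assms by simp
  have "2 * (K / (1 + r0) + E) * X - (4 * E * real k + 2 * (K / (1 + r0) + E)) * T
     = 2 * (K / (1 + r0)) * (X - T) + 2 * E * (X - T - 2 * real k * T)" by (simp add: algebra_simps add_divide_distrib[symmetric])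
  thus ?thesis using A B by linarith
qed

lemma one_sided:
  fixes w :: "real^'m \<Rightarrow> real" and Dw :: "real^'m \<Rightarrow> real^'m" and D2w :: "real^'m \<Rightarrow> real^'m^'m"
    and col :: "real^'m \<Rightarrow> 'd::finite \<Rightarrow> real^'m" and b :: "real^'m \<Rightarrow> real^'m"
  assumes D1: "\<And>y. (w has_derivative (\<lambda>v. Dw y \<bullet> v)) (at y)"
    and D2: "\<And>y. (Dw has_derivative (\<lambda>v. D2w y *v v)) (at y)"
    and eq: "\<And>y. - (\<Sum>j\<in>UNIV. col y j \<bullet> (D2w y *v col y j)) + (alpha *\<^sub>R y + b y) \<bullet> Dw y \<le> M"
    and ap: "alpha > 0"
    and Tb: "\<And>y. (\<Sum>j\<in>UNIV. col y j \<bullet> col y j) \<le> T"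
    and Bb: "\<And>y. norm (b y) \<le> Bb"
    and poly: "\<And>y. \<bar>w y\<bar> \<le> K0 * (1 + norm y ^ k)"
  shows "\<exists>K C. K \<ge> 0 \<and> (\<forall>y. w y \<le> K * ln (1 + y \<bullet> y) + C)"
proof -
  have T0: "T \<ge> 0" using Tb[of 0] by (smt (verit) inner_ge_zero sum_nonneg)
  have B0: "Bb \<ge> 0" using Bb[of 0] norm_ge_zero[of "b 0"] by linarith
  have K00: "K0 \<ge> 0"
  proof -
    have "0 \<le> K0 * (1 + norm (0::real^'m) ^ k)" using poly[of 0] by linarith
    moreover have "1 + norm (0::real^'m) ^ k > 0" by (simp add: add_pos_nonneg)
    ultimately show ?thesis by (simp add: zero_le_mult_iff)
  qed
  define K where "K = (\<bar>M\<bar> + 1) / alpha"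
  have K0: "K \<ge> 0" unfolding K_def using ap by simp
  have Ka: "K * alpha = \<bar>M\<bar> + 1" unfolding K_def using ap by simp
  define C' where "C' = 2 * T * (2 * real k + 1) + alpha"
  have C'0: "C' \<ge> 0" unfolding C'_def using T0 ap by simp
  define R where "R = max 1 ((2 * Bb + C') / alpha)"
  have cw: "continuous_on UNIV w"
    using D1 has_derivative_continuous continuous_at_imp_continuous_on by blast
  obtain y1 where y1: "y1 \<in> cball 0 R" "\<And>y. y \<in> cball 0 R \<Longrightarrow> w y \<le> w y1"
    using continuous_attains_sup[of "cball (0::real^'m) R" w] continuous_on_subset[OF cw]
    by (metis R_def compact_cball empty_iff centre_in_cball le_max_iff_disj zero_le_one subset_UNIV)
  define Wm where "Wm = w y1"
  have claim: "w y \<le> K * ln (1 + y \<bullet> y) + e * (1 + y \<bullet> y) ^ Suc k + Wm" if ep: "e > 0" for e y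
  proof -
    define u where "u y = w y - (K * ln (1 + y \<bullet> y) + e * (1 + y \<bullet> y) ^ Suc k)" for y
    have pos: "1 + y \<bullet> y > 0" for y :: "real^'m" by (smt (verit) inner_ge_zero)
    have cu: "continuous_on UNIV u" unfolding u_def
      by (intro continuous_intros cw) (metis less_irrefl pos)
    have far: "\<exists>\<rho>. \<forall>y. norm y > \<rho> \<longrightarrow> u y < u 0"
    proof (intro exI allI impI)
      fix y :: "real^'m"
      define \<rho> where "\<rho> = (2 * K0 + \<bar>u 0\<bar> + 1) / e"
      assume yr: "norm y > \<rho>"
      define r where "r = y \<bullet> y"
      have r0: "r \<ge> 0" unfolding r_def by simp
      have nr: "norm y ^ 2 = r" unfolding r_def by (simp add: power2_norm_eq_inner)
      have "0 < (norm y - 1/2)^2 + 3/4" by (simp add: add_nonneg_pos)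
      hence ny: "norm y < 1 + r" unfolding nr[symmetric] by (simp add: power2_eq_square algebra_simps)
      have "norm y ^ k \<le> (1 + r) ^ k" using ny by (intro power_mono) auto
      moreover have "1 \<le> (1 + r) ^ k" using r0 by (simp add: one_le_power)
      ultimately have "K0 * (1 + norm y ^ k) \<le> K0 * (2 * (1 + r) ^ k)"
        using K00 by (intro mult_left_mono) auto
      hence wy: "w y \<le> 2 * K0 * (1 + r) ^ k" using poly[of y] by simp
      have ln0: "K * ln (1 + r) \<ge> 0" using K0 r0 by simp
      have "u y \<le> 2 * K0 * (1 + r) ^ k - e * (1 + r) ^ Suc k"
        unfolding u_def r_def[symmetric] using wy ln0 by linarith
      also have "\<dots> = (1 + r) ^ k * (2 * K0 - e * (1 + r))" by (simp add: algebra_simps)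
      also have "\<dots> \<le> 2 * K0 - e * (1 + r)"
      proof -
        have "e * (1 + r) > e * \<rho>" using yr ny ep by simp
        also have "e * \<rho> = 2 * K0 + \<bar>u 0\<bar> + 1" unfolding \<rho>_def using ep by simp
        finally have neg: "2 * K0 - e * (1 + r) \<le> 0" using K00 by linarith
        have "(1 + r) ^ k * (2 * K0 - e * (1 + r)) \<le> 1 * (2 * K0 - e * (1 + r))"
          by (rule mult_right_mono_neg[OF \<open>1 \<le> (1 + r) ^ k\<close> neg])
        thus ?thesis by simp
      qed
      also have "\<dots> < u 0"
      proof -
        have "e * (1 + r) > e * \<rho>" using yr ny ep by simp
        also have "e * \<rho> = 2 * K0 + \<bar>u 0\<bar> + 1" unfolding \<rho>_def using ep by simp
        finally show ?thesis by linarith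
      qed
      finally show "u y < u 0" .
    qed
    obtain y0 where y0: "\<And>y. u y \<le> u y0" using exists_max[OF cu far] by blast
    have nR: "norm y0 \<le> R"
    proof (rule ccontr)
      assume "\<not> norm y0 \<le> R"
      hence nR: "norm y0 > R" by simp
      define \<rho> where "\<rho> = norm y0"
      define r0 where "r0 = y0 \<bullet> y0"
      have r00: "r0 \<ge> 0" unfolding r0_def by simp
      have rr: "r0 = \<rho> * \<rho>" unfolding r0_def \<rho>_def by (simp add: dot_square_norm power2_eq_square)
      define E where "E = e * real (Suc k) * (1 + r0) ^ k"
      define G where "G = K / (1 + r0) + E"
      define G' where "G' = - K / (1 + r0)\<^sup>2 + e * real (Suc k) * real k * (1 + r0) ^ (k - 1)"
      have E0: "E \<ge> 0" unfolding E_def using ep r00 by simp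
      have G0: "G \<ge> 0" unfolding G_def using E0 K0 r00 by simp
      have mx: "\<And>y. w y - (K * ln (1 + y \<bullet> y) + e * (1 + y \<bullet> y) ^ Suc k)
               \<le> w y0 - (K * ln (1 + y0 \<bullet> y0) + e * (1 + y0 \<bullet> y0) ^ Suc k)"
        using y0 unfolding u_def .
      have L1: "Dw y0 \<bullet> c = G * (2 * (y0 \<bullet> c))" for c
        using line_facts(1)[OF D1 D2 mx, of c] unfolding G_def E_def r0_def .
      have L2: "(D2w y0 *v c) \<bullet> c \<le> G' * (2 * (y0 \<bullet> c)) * (2 * (y0 \<bullet> c)) + G * (2 * (c \<bullet> c))" for c
        using line_facts(2)[OF D1 D2 mx, of c] unfolding G_def G'_def E_def r0_def .
      have stepa: "G' * (2 * (y0 \<bullet> c)) * (2 * (y0 \<bullet> c)) \<le> 4 * E * real k * (c \<bullet> c)" for c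
      proof -
        have cs: "(y0 \<bullet> c)^2 \<le> r0 * (c \<bullet> c)" unfolding r0_def by (rule Cauchy_Schwarz_ineq)
        define A where "A = e * real (Suc k) * real k * (1 + r0) ^ (k - 1)"
        have A0: "A \<ge> 0" unfolding A_def using ep r00 by simp
        have "G' * (2 * (y0 \<bullet> c)) * (2 * (y0 \<bullet> c)) = 4 * (- K / (1 + r0)\<^sup>2) * (y0 \<bullet> c)^2 + 4 * A * (y0 \<bullet> c)^2"
          unfolding G'_def A_def by (simp add: algebra_simps power2_eq_square)
        also have "\<dots> \<le> 4 * A * (y0 \<bullet> c)^2"
        proof -
          have "- K / (1 + r0)\<^sup>2 \<le> 0" using K0 by simp
          hence "(- K / (1 + r0)\<^sup>2) * (4 * (y0 \<bullet> c)^2) \<le> 0"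
            by (rule mult_nonpos_nonneg) simp
          hence "4 * (- K / (1 + r0)\<^sup>2) * (y0 \<bullet> c)^2 \<le> 0"
            by (simp only: ac_simps)
          thus ?thesis by simp
        qed
        also have "\<dots> \<le> 4 * A * (r0 * (c \<bullet> c))" using cs A0 by (intro mult_left_mono) auto
        also have "\<dots> = 4 * e * real (Suc k) * (c \<bullet> c) * (real k * (1 + r0) ^ (k - 1) * r0)"
          unfolding A_def by (simp add: algebra_simps)
        also have "\<dots> \<le> 4 * e * real (Suc k) * (c \<bullet> c) * (real k * (1 + r0) ^ k)"
          using pow_km1[OF r00, of k] ep by (intro mult_left_mono) auto
        also have "\<dots> = 4 * E * real k * (c \<bullet> c)" unfolding E_def by (simp add: algebra_simps)
        finally show ?thesis .
      qed
      have stepb: "(\<Sum>j\<in>UNIV. col y0 j \<bullet> (D2w y0 *v col y0 j)) \<le> (4 * E * real k + 2 * G) * T"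
      proof -
        have "(\<Sum>j\<in>UNIV. col y0 j \<bullet> (D2w y0 *v col y0 j)) \<le> (\<Sum>j\<in>UNIV. (4 * E * real k + 2 * G) * (col y0 j \<bullet> col y0 j))"
        proof (rule sum_mono)
          fix j
          show "col y0 j \<bullet> (D2w y0 *v col y0 j) \<le> (4 * E * real k + 2 * G) * (col y0 j \<bullet> col y0 j)"
            using L2[of "col y0 j"] stepa[of "col y0 j"] by (simp add: inner_commute algebra_simps)
        qed
        also have "\<dots> = (4 * E * real k + 2 * G) * (\<Sum>j\<in>UNIV. col y0 j \<bullet> col y0 j)"
          by (simp add: sum_distrib_left)
        also have "\<dots> \<le> (4 * E * real k + 2 * G) * T"
          using Tb[of y0] E0 G0 by (intro mult_left_mono) auto
        finally show ?thesis .
      qed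
      define X where "X = alpha * r0 + y0 \<bullet> b y0"
      have stepc: "(alpha *\<^sub>R y0 + b y0) \<bullet> Dw y0 = 2 * G * X"
        using L1[of "alpha *\<^sub>R y0 + b y0"] unfolding X_def r0_def
        by (simp add: inner_commute inner_add_right algebra_simps)
      have Xb: "X \<ge> alpha * r0 - Bb * \<rho>"
      proof -
        have "\<bar>y0 \<bullet> b y0\<bar> \<le> norm y0 * norm (b y0)" by (rule Cauchy_Schwarz_ineq2)
        also have "\<dots> \<le> norm y0 * Bb" using Bb[of y0] by (intro mult_left_mono) auto
        finally show ?thesis unfolding X_def \<rho>_def by (simp add: mult.commute)
      qed
      have rho1: "\<rho> \<ge> 1" "\<rho> > (2 * Bb + C') / alpha" using nR unfolding R_def \<rho>_def by auto
      have cond: "alpha * r0 \<ge> 2 * Bb * \<rho> + 2 * T * (2 * real k + 1) + alpha"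
      proof -
        have "alpha * \<rho> > 2 * Bb + C'" using rho1(2) ap by (simp add: field_simps)
        hence "\<rho> * (alpha * \<rho>) \<ge> \<rho> * (2 * Bb + C')" using rho1(1) by (intro mult_left_mono) auto
        moreover have "\<rho> * C' \<ge> C'" using mult_left_mono[OF rho1(1) C'0] by (simp add: mult.commute)
        ultimately show ?thesis unfolding rr C'_def by (simp add: algebra_simps)
      qed
      have "2 * G * X - (4 * E * real k + 2 * G) * T \<ge> K * alpha"
        using final_real[OF K0 E0 T0 ap r00 cond Xb] B0 rho1 unfolding G_def by simp
      moreover have "- (\<Sum>j\<in>UNIV. col y0 j \<bullet> (D2w y0 *v col y0 j)) + 2 * G * X \<le> M"
        using eq[of y0] stepc by simp
      ultimately show False using stepb Ka by linarith
    qed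
    have "u y \<le> u y0" by (rule y0)
    also have "u y0 \<le> w y0"
    proof -
      have "K * ln (1 + y0 \<bullet> y0) \<ge> 0" using K0 by simp
      moreover have "e * (1 + y0 \<bullet> y0) ^ Suc k \<ge> 0" using ep pos[of y0] by simp
      ultimately show ?thesis unfolding u_def by linarith
    qed
    also have "w y0 \<le> Wm" unfolding Wm_def using y1(2)[of y0] nR by simp
    finally show ?thesis unfolding u_def by simp
  qed
  have "w y \<le> K * ln (1 + y \<bullet> y) + Wm" for y
  proof (rule ccontr)
    assume "\<not> ?thesis"
    hence d: "w y - (K * ln (1 + y \<bullet> y) + Wm) > 0" by simp
    define P where "P = (1 + y \<bullet> y) ^ Suc k"
    have P0: "P > 0" unfolding P_def by (smt (verit) inner_ge_zero zero_less_power)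
    define e where "e = (w y - (K * ln (1 + y \<bullet> y) + Wm)) / (2 * P)"
    have e0: "e > 0" unfolding e_def using d P0 by simp
    have "e * P = (w y - (K * ln (1 + y \<bullet> y) + Wm)) / 2" unfolding e_def using P0 by simp
    thus False using claim[OF e0, of y] d unfolding P_def by argo
  qed
  thus ?thesis using K0 by blast
qed

lemma log_ineq:
  fixes A eta r L :: real
  assumes A: "A > 0" and eta: "eta > 0" and r: "r \<ge> 0"
  shows "A * (1 + ln (1 + r)) - eta * r \<le> A * ln A - A * ln eta + eta"
proof -
  have p: "(1 + r) * eta / A > 0" using A eta r by simp
  have "ln ((1 + r) * eta / A) = ln (1 + r) + ln eta - ln A"
    using A eta r by (simp add: ln_div ln_mult)
  moreover have "ln ((1 + r) * eta / A) \<le> (1 + r) * eta / A - 1" by (rule ln_le_minus_one[OF p])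
  ultimately have "ln (1 + r) \<le> (1 + r) * eta / A - 1 + ln A - ln eta" by linarith
  hence "A * ln (1 + r) \<le> A * ((1 + r) * eta / A - 1 + ln A - ln eta)"
    using A by (intro mult_left_mono) auto
  also have "\<dots> = (1 + r) * eta - A + A * ln A - A * ln eta" using A by (simp add: field_simps)
  finally show ?thesis by (simp add: algebra_simps)
qed

theorem lemma4p2:
  fixes tau :: "real^'m \<Rightarrow> real^'d^'m"
    and b :: "real^'m \<Rightarrow> real^'m"
    and alpha theta C1 lambda1 :: real
    and g :: "real^'m \<Rightarrow> real"
    and h :: "real^'n \<Rightarrow> real"
    and f :: "real^'n \<Rightarrow> real^'m \<Rightarrow> real"
    and w :: "real^'m \<Rightarrow> real"
    and Dw :: "real^'m \<Rightarrow> real^'m"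
    and D2w :: "real^'m \<Rightarrow> real^'m^'m"
  assumes alpha_pos: "alpha > 0"
    and tau_bdd: "\<And>i j. bounded (range (\<lambda>y. tau y $ i $ j))"
    and tau_lip: "\<And>i j. \<exists>L. L-lipschitz_on UNIV (\<lambda>y. tau y $ i $ j)"
    and b_bdd: "bounded (range b)"
    and b_lip: "\<exists>L. L-lipschitz_on UNIV b"
    and theta_pos: "theta > 0"
    and ellip: "\<And>y xi. xi \<bullet> ((tau y ** transpose (tau y)) *v xi) \<ge> theta * (norm xi)\<^sup>2"
    and g_bdd: "bounded (range g)"
    and g_lip: "\<exists>L. L-lipschitz_on UNIV g"
    and h_lip: "\<exists>L. L-lipschitz_on UNIV h"
    and C1_pos: "C1 > 0"
    and h_bound: "\<And>x. \<bar>h x\<bar> \<le> C1"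
    and f_def: "\<And>x y. f x y = h x * g y"
    and w_D1: "\<And>y. (w has_derivative (\<lambda>v. Dw y \<bullet> v)) (at y)"
    and w_D2: "\<And>y. (Dw has_derivative (\<lambda>v. D2w y *v v)) (at y)"
    and w_C2: "continuous_on UNIV D2w"
    and cell: "\<And>y. Lop tau alpha b y (Dw y) (D2w y) + g y = lambda1"
    and w0: "w 0 = 0"
    and w_poly: "\<exists>K k. \<forall>y. \<bar>w y\<bar> \<le> K * (1 + norm y ^ k)"
  shows "\<exists>C5 > 0.
           (\<forall>y. \<bar>w y\<bar> \<le> C5 * (1 + ln (1 + (norm y)\<^sup>2)))
         \<and> (\<forall>eta > 0. \<forall>x y. \<bar>h x * w y\<bar> - eta * (norm y)\<^sup>2
               \<le> C1 * C5 * ln (C1 * C5) - C1 * C5 * ln eta + eta)"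
proof -
  define col where "col y j = (\<chi> i. tau y $ i $ j)" for y j
  obtain Gb where Gb: "\<And>y. \<bar>g y\<bar> \<le> Gb"
    using g_bdd unfolding bounded_iff by (metis rangeI real_norm_def)
  obtain Bb where Bb: "\<And>y. norm (b y) \<le> Bb"
    using b_bdd unfolding bounded_iff by (metis rangeI)
  have "\<forall>i j. \<exists>B. \<forall>y. \<bar>tau y $ i $ j\<bar> \<le> B"
    using tau_bdd unfolding bounded_iff by (metis rangeI real_norm_def)
  then obtain Bt where Bt: "\<And>i j y. \<bar>tau y $ i $ j\<bar> \<le> Bt i j" by metis
  define T where "T = (\<Sum>j\<in>UNIV. \<Sum>i\<in>UNIV. (Bt i j)^2)"
  have Tb: "(\<Sum>j\<in>UNIV. col y j \<bullet> col y j) \<le> T" for y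
    unfolding T_def col_def inner_vec_def
  proof (intro sum_mono)
    fix j i
    have "\<bar>tau y $ i $ j\<bar> ^ 2 \<le> (Bt i j)^2" using Bt[of y i j] by (intro power_mono) auto
    thus "(\<chi> i. tau y $ i $ j) $ i \<bullet> (\<chi> i. tau y $ i $ j) $ i \<le> (Bt i j)\<^sup>2"
      by (simp add: power2_eq_square)
  qed
  obtain K0 k where poly: "\<And>y. \<bar>w y\<bar> \<le> K0 * (1 + norm y ^ k)" using w_poly by blast
  define M where "M = \<bar>lambda1\<bar> + Gb"
  have tr: "trace (tau y ** transpose (tau y) ** A) = (\<Sum>j\<in>UNIV. col y j \<bullet> (A *v col y j))" for y A
    unfolding col_def by (rule trace_col)
  have eqw: "- (\<Sum>j\<in>UNIV. col y j \<bullet> (D2w y *v col y j)) + (alpha *\<^sub>R y + b y) \<bullet> Dw y = lambda1 - g y" for y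
    using cell[of y] unfolding Lop_def tr by (simp add: inner_add_left algebra_simps)
  have e1: "- (\<Sum>j\<in>UNIV. col y j \<bullet> (D2w y *v col y j)) + (alpha *\<^sub>R y + b y) \<bullet> Dw y \<le> M" for y
    using eqw[of y] Gb[of y] unfolding M_def by linarith
  have e2: "- (\<Sum>j\<in>UNIV. col y j \<bullet> ((- D2w y) *v col y j)) + (alpha *\<^sub>R y + b y) \<bullet> (- Dw y) \<le> M" for y
  proof -
    have "(- D2w y) *v v = - (D2w y *v v)" for v
      by (simp add: matrix_vector_mult_def vec_eq_iff sum_negf)
    hence "- (\<Sum>j\<in>UNIV. col y j \<bullet> ((- D2w y) *v col y j)) + (alpha *\<^sub>R y + b y) \<bullet> (- Dw y)
       = - (- (\<Sum>j\<in>UNIV. col y j \<bullet> (D2w y *v col y j)) + (alpha *\<^sub>R y + b y) \<bullet> Dw y)"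
      by (simp add: sum_negf)
    thus ?thesis using eqw[of y] Gb[of y] unfolding M_def by linarith
  qed
  have nD1: "((\<lambda>y. - w y) has_derivative (\<lambda>v. (- Dw y) \<bullet> v)) (at y)" for y
    using has_derivative_minus[OF w_D1[of y]] by simp
  have nD2: "((\<lambda>y. - Dw y) has_derivative (\<lambda>v. (- D2w y) *v v)) (at y)" for y
  proof -
    have "(- D2w y) *v v = - (D2w y *v v)" for v
      by (simp add: matrix_vector_mult_def vec_eq_iff sum_negf)
    thus ?thesis using has_derivative_minus[OF w_D2[of y]] by simp
  qed
  obtain Ka Ca where A: "Ka \<ge> 0" "\<And>y. w y \<le> Ka * ln (1 + y \<bullet> y) + Ca"
    using one_sided[OF w_D1 w_D2 e1 alpha_pos Tb Bb poly] by blast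
  obtain Kb Cb where B: "Kb \<ge> 0" "\<And>y. - w y \<le> Kb * ln (1 + y \<bullet> y) + Cb"
    using one_sided[of "\<lambda>y. - w y" "\<lambda>y. - Dw y" "\<lambda>y. - D2w y", OF nD1 nD2 e2 alpha_pos Tb Bb, of K0 k] poly
    by auto
  define C5 where "C5 = max Ka Kb + max \<bar>Ca\<bar> \<bar>Cb\<bar> + 1"
  have C5p: "C5 > 0" unfolding C5_def using A(1) by linarith
  have part1: "\<bar>w y\<bar> \<le> C5 * (1 + ln (1 + (norm y)\<^sup>2))" for y
  proof -
    have yy: "y \<bullet> y = (norm y)\<^sup>2" by (simp add: power2_norm_eq_inner)
    define L where "L = ln (1 + (norm y)\<^sup>2)"
    have L0: "L \<ge> 0" unfolding L_def by simp
    have "Ka * L \<le> C5 * L" "Kb * L \<le> C5 * L" unfolding C5_def using L0 A(1) B(1)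
      by (intro mult_right_mono; simp)+
    moreover have "Ca \<le> C5" "Cb \<le> C5" unfolding C5_def using A(1) B(1) by linarith+
    ultimately show ?thesis using A(2)[of y] B(2)[of y] unfolding yy L_def[symmetric]
      by (simp add: algebra_simps)
  qed
  have part2: "\<bar>h x * w y\<bar> - eta * (norm y)\<^sup>2 \<le> C1 * C5 * ln (C1 * C5) - C1 * C5 * ln eta + eta"
    if eta: "eta > 0" for eta x y
  proof -
    have "\<bar>h x * w y\<bar> = \<bar>h x\<bar> * \<bar>w y\<bar>" by (simp add: abs_mult)
    also have "\<dots> \<le> C1 * (C5 * (1 + ln (1 + (norm y)\<^sup>2)))"
      using h_bound[of x] part1[of y] by (intro mult_mono) auto
    finally have "\<bar>h x * w y\<bar> \<le> (C1 * C5) * (1 + ln (1 + (norm y)\<^sup>2))" by (simp add: mult.assoc)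
    moreover have "(C1 * C5) * (1 + ln (1 + (norm y)\<^sup>2)) - eta * (norm y)\<^sup>2 \<le> C1 * C5 * ln (C1 * C5) - C1 * C5 * ln eta + eta"
      by (rule log_ineq) (use C1_pos C5p eta in auto)
    ultimately show ?thesis by linarith
  qed
  show ?thesis using C5p part1 part2 by blast
qed

end
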